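(* Let $m\ge2$, $Q=T_{(2^m)}$ and $K=K_Q(2)$. Let $M=\mathrm{diag}(a,a^{-1})X^b$ and $M'=\mathrm{diag}(a',a'^{-1})X^{b'}$ be elements of $K$ (with $\mathrm{diag}(a,a^{-1}),\mathrm{diag}(a',a'^{-1})\in Q$, $b,b'\in\{0,1\}$) such that $[M,M']=\pm\mathbbm{1}$. Then: (1) if $b=b'=0$, then $M,M'\in Q$ and $[M,M']=\mathbbm{1}$; (2) if $b=1$, $b'=0$, then $M'\in T_{(4)}$, and if moreover $[M,M']=\mathbbm{1}$ then $M'\in Z(K)$; (3) if $b=0$, $b'=1$, then $M\in T_{(4)}$, and if moreover $[M,M']=\mathbbm{1}$ then $M\in Z(K)$; (4) if $b=b'=1$, then $M=S_\chi M'$ for some $S_\chi\in T_{(4)}$, and if moreover $[M,M']=\mathbbm{1}$ then $M=\pm M'$.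
   Context: Let $\{|0\rangle,|1\rangle\}$ be the computational basis of $\mathbb{C}^2$ and $X|q\rangle=|q+1\bmod 2\rangle$. For $\xi:\mathbb{Z}_2\to U(1)$ let $S_\xi=\mathrm{diag}(\xi(0),\xi(1))$; $T=\{S_\xi:\xi(0)\xi(1)=1\}$ and $T_{(2^k)}=\{S\in T:S^{2^k}=\mathbbm{1}\}$. $K_Q(2)$ is the subgroup of $SU(2)$ generated by all $S_\xi X^b$ with $S_\xi\in Q$, $b\in\mathbb{Z}_2$. $Z(K)$ is the center of $K$. The commutator is $[A,B]=ABA^{-1}B^{-1}$. *)

theory Defs
  imports "HOL-Analysis.Analysis" "HOL-Library.Numeral_Type"
begin

text \<open>2x2 complex matrices, indexed by the type 2 = Z_2 (elements 0 and 1).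
  Basis vector |q> corresponds to index q.\<close>
type_synonym mat2 = "complex^2^2"

definition mpow :: "mat2 \<Rightarrow> nat \<Rightarrow> mat2" where
  "mpow A n = (((**) A) ^^ n) (mat 1)"

text \<open>Shift X |q> = |q+1 mod 2>, i.e. matrix entry (i,j) is 1 iff i = j + 1.\<close>
definition Xm :: mat2 where
  "Xm = (\<chi> i j. if i = j + 1 then 1 else 0)"

definition Sdiag :: "(2 \<Rightarrow> complex) \<Rightarrow> mat2" where
  "Sdiag \<xi> = (\<chi> i j. if i = j then \<xi> i else 0)"

definition diag2 :: "complex \<Rightarrow> complex \<Rightarrow> mat2" where
  "diag2 a a' = Sdiag (\<lambda>q. if q = 0 then a else a')"

definition Tgrp :: "mat2 set" where
  "Tgrp = {Sdiag \<xi> | \<xi>. (\<forall>q. cmod (\<xi> q) = 1) \<and> \<xi> 0 * \<xi> 1 = 1}"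

definition Tsub :: "nat \<Rightarrow> mat2 set" where
  "Tsub N = {S \<in> Tgrp. mpow S N = mat 1}"

inductive_set gen_grp :: "mat2 set \<Rightarrow> mat2 set" for G where
  one: "mat 1 \<in> gen_grp G"
| mul: "g \<in> gen_grp G \<Longrightarrow> x \<in> G \<Longrightarrow> g ** x \<in> gen_grp G"
| mulinv: "g \<in> gen_grp G \<Longrightarrow> x \<in> G \<Longrightarrow> g ** matrix_inv x \<in> gen_grp G"

definition KQ :: "mat2 set \<Rightarrow> mat2 set" where
  "KQ Q = gen_grp {S ** mpow Xm b | S b. S \<in> Q \<and> b \<le> 1}"

definition center :: "mat2 set \<Rightarrow> mat2 set" where
  "center K = {z \<in> K. \<forall>g \<in> K. z ** g = g ** z}"

definition commut :: "mat2 \<Rightarrow> mat2 \<Rightarrow> mat2" where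
  "commut A B = A ** B ** matrix_inv A ** matrix_inv B"

end

theory Submission
  imports Defs
begin

definition M2 :: "complex \<Rightarrow> complex \<Rightarrow> complex \<Rightarrow> complex \<Rightarrow> mat2" where
  "M2 p q r s = (\<chi> i j. if i = 0 then (if j = 0 then p else q) else (if j = 0 then r else s))"

lemma two_cases: "(i::2) = 0 \<or> i = 1"
  by (metis exhaust_2 zero_neq_one num1_eq_iff) 

lemma M2_eta: "A = M2 (A$0$0) (A$0$1) (A$1$0) (A$1$1)"
  unfolding M2_def vec_eq_iff using two_cases by auto

lemma M2_nth: "M2 p q r s $ 0 $ 0 = p" "M2 p q r s $ 0 $ 1 = q" "M2 p q r s $ 1 $ 0 = r" "M2 p q r s $ 1 $ 1 = s"
  by (simp_all add: M2_def)

lemma M2_eq: "M2 p q r s = M2 p' q' r' s' \<longleftrightarrow> p = p' \<and> q = q' \<and> r = r' \<and> s = s'"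
  by (metis M2_nth)

lemma UNIV2: "(UNIV::2 set) = {0,1}" using two_cases by auto

lemma M2_mul: "M2 p q r s ** M2 p2 q2 r2 s2 = M2 (p * p2 + q * r2) (p * q2 + q * s2) (r * p2 + s * r2) (r * q2 + s * s2)"
  unfolding M2_def matrix_matrix_mult_def vec_eq_iff UNIV2 by auto

lemma mat1_M2: "mat 1 = M2 1 0 0 1"
  unfolding M2_def mat_def vec_eq_iff using two_cases by auto

lemma nmat1_M2: "- mat 1 = M2 (-1) 0 0 (-1)"
  unfolding M2_def mat_def vec_eq_iff using two_cases by auto

lemma one_one_2: "(1::2) + 1 = 0" by simp

lemma Xm_M2: "Xm = M2 0 1 1 0"
  unfolding M2_def Xm_def vec_eq_iff
  apply (intro allI) subgoal for i j using two_cases[of i] two_cases[of j] one_one_2 by auto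
  done

lemma diag2_M2: "diag2 a d = M2 a 0 0 d"
  unfolding M2_def diag2_def Sdiag_def vec_eq_iff using two_cases by auto

lemma neg_M2: "- M2 p q r s = M2 (-p) (-q) (-r) (-s)"
  unfolding M2_def vec_eq_iff by auto

lemma inv_unique: assumes "A ** B = mat 1" "B ** A = (mat 1::mat2)" shows "matrix_inv A = B"
proof -
  have ex: "\<exists>B. A ** B = mat 1 \<and> B ** A = (mat 1::mat2)" using assms by blast
  let ?C = "matrix_inv A"
  have C: "A ** ?C = mat 1 \<and> ?C ** A = mat 1" unfolding matrix_inv_def by (rule someI_ex[OF ex])
  have "?C = ?C ** (A ** B)" using assms by simp
  also have "\<dots> = (?C ** A) ** B" by (simp add: matrix_mul_assoc)
  also have "\<dots> = B" using C by simp
  finally show ?thesis .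
qed

lemma mpow_diag: "mpow (M2 p 0 0 s) n = M2 (p^n) 0 0 (s^n)"
  by (induction n) (auto simp: mpow_def mat1_M2 M2_mul)

lemma mpow0: "mpow A 0 = mat 1" by (simp add: mpow_def)
lemma mpow1: "mpow A 1 = A" by (simp add: mpow_def)
lemma mpow1s: "mpow A (Suc 0) = A" by (simp add: mpow_def)

lemma Q_info: assumes "diag2 c (inverse c) \<in> Tsub N" shows "cmod c = 1" "c \<noteq> 0"
proof -
  obtain \<xi> where x: "Sdiag \<xi> = diag2 c (inverse c)" "\<forall>q. cmod (\<xi> q) = 1"
    using assms unfolding Tsub_def Tgrp_def by auto
  have "Sdiag \<xi> $ 0 $ 0 = \<xi> 0" by (simp add: Sdiag_def)
  moreover have "diag2 c (inverse c) $ 0 $ 0 = c" by (simp add: diag2_def Sdiag_def)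
  ultimately have "\<xi> 0 = c" using x by simp
  thus "cmod c = 1" using x by auto
  thus "c \<noteq> 0" by auto
qed

lemma Tsub4I: assumes "cmod c = 1" "c^4 = 1" shows "diag2 c (inverse c) \<in> Tsub 4"
proof -
  have c0: "c \<noteq> 0" using assms by auto
  have "diag2 c (inverse c) = Sdiag (\<lambda>q. if q = 0 then c else inverse c)" by (simp add: diag2_def)
  moreover have "\<forall>q. cmod ((\<lambda>q. if q = 0 then c else inverse c) q) = 1"
    using assms by (simp add: norm_inverse)
  ultimately have "diag2 c (inverse c) \<in> Tgrp" unfolding Tgrp_def using c0 by auto
  moreover have "mpow (diag2 c (inverse c)) 4 = mat 1"
    unfolding diag2_M2 mpow_diag mat1_M2 M2_eq using assms by (simp add: power_inverse)
  ultimately show ?thesis unfolding Tsub_def by auto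
qed

lemma scalar_comm: "M2 k 0 0 k ** g = g ** M2 k 0 0 k"
proof -
  have "M2 k 0 0 k ** M2 p q r s = M2 p q r s ** M2 k 0 0 k" for p q r s
    by (simp add: M2_mul mult.commute)
  thus ?thesis using M2_eta[of g] by metis
qed

lemma scalar_center: assumes "z = mat 1 \<or> z = - mat 1" "z \<in> K" shows "z \<in> center K"
proof -
  have "\<forall>g. z ** g = g ** z"
    using assms(1) scalar_comm unfolding nmat1_M2 unfolding mat1_M2 by blast
  thus ?thesis using assms unfolding center_def by auto
qed

lemma sq4: assumes "(x::complex)^2 = 1 \<or> x^2 = -1" shows "x^4 = 1"
proof -
  have e: "x^4 = (x^2)^2" by (simp flip: power_mult)
  from assms show ?thesis
  proof
    assume h: "x^2 = 1" show ?thesis unfolding e h by simp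
  next
    assume h: "x^2 = -1" show ?thesis unfolding e h by simp
  qed
qed

theorem lemma9:
  fixes m b b' :: nat and a a' :: complex and Q K :: "mat2 set" and M M' :: mat2
  assumes "m \<ge> 2"
    and "Q = Tsub (2 ^ m)"
    and "K = KQ Q"
    and "diag2 a (inverse a) \<in> Q" and "diag2 a' (inverse a') \<in> Q"
    and "b \<le> 1" and "b' \<le> 1"
    and "M = diag2 a (inverse a) ** mpow Xm b"
    and "M' = diag2 a' (inverse a') ** mpow Xm b'"
    and "M \<in> K" and "M' \<in> K"
    and "commut M M' = mat 1 \<or> commut M M' = - mat 1"
  shows "(b = 0 \<and> b' = 0 \<longrightarrow> M \<in> Q \<and> M' \<in> Q \<and> commut M M' = mat 1)
    \<and> (b = 1 \<and> b' = 0 \<longrightarrow> M' \<in> Tsub 4 \<and> (commut M M' = mat 1 \<longrightarrow> M' \<in> center K))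
    \<and> (b = 0 \<and> b' = 1 \<longrightarrow> M \<in> Tsub 4 \<and> (commut M M' = mat 1 \<longrightarrow> M \<in> center K))
    \<and> (b = 1 \<and> b' = 1 \<longrightarrow> (\<exists>S \<in> Tsub 4. M = S ** M')
         \<and> (commut M M' = mat 1 \<longrightarrow> M = M' \<or> M = - M'))"
proof -
  have ua: "cmod a = 1" and a0: "a \<noteq> 0" using Q_info assms(2,4) by blast+
  have ua': "cmod a' = 1" and a0': "a' \<noteq> 0" using Q_info assms(2,5) by blast+
  have D: "\<And>c. diag2 c (inverse c) = M2 c 0 0 (inverse c)" by (simp add: diag2_M2)
  have Dinv: "\<And>c. c \<noteq> 0 \<Longrightarrow> matrix_inv (M2 c 0 0 (inverse c)) = M2 (inverse c) 0 0 c"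
    by (rule inv_unique) (simp_all add: M2_mul mat1_M2 M2_eq)
  have DXinv: "\<And>c. c \<noteq> 0 \<Longrightarrow> matrix_inv (M2 0 c (inverse c) 0) = M2 0 c (inverse c) 0"
    by (rule inv_unique) (simp_all add: M2_mul mat1_M2 M2_eq)
  have DX: "\<And>c. M2 c 0 0 (inverse c) ** M2 0 1 1 0 = M2 0 c (inverse c) 0"
    by (simp add: M2_mul)
  have c1: "commut M M' = mat 1 \<or> commut M M' = - mat 1" using assms(12) .
  show ?thesis
  proof (intro conjI impI)
    assume h: "b = 0 \<and> b' = 0"
    have MM: "M = diag2 a (inverse a)" "M' = diag2 a' (inverse a')" using h assms(8,9) by (simp_all add: mpow0)
    thus "M \<in> Q" "M' \<in> Q" using assms(4,5) by auto
    show "commut M M' = mat 1" unfolding commut_def MM D Dinv[OF a0] Dinv[OF a0'] M2_mul mat1_M2 M2_eq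
      using a0 a0' by (simp add: field_simps)
  next
    assume h: "b = 1 \<and> b' = 0"
    have MM: "M = M2 0 a (inverse a) 0" "M' = M2 a' 0 0 (inverse a')" using h assms(8,9)
      by (simp_all add: mpow0 mpow1 mpow1s D Xm_M2 DX)
    have cm: "commut M M' = M2 (inverse a' ^ 2) 0 0 (a'^2)"
      unfolding commut_def MM Dinv[OF a0'] DXinv[OF a0] M2_mul M2_eq
      using a0 a0' by (simp add: field_simps power2_eq_square)
    have sq: "a'^2 = 1 \<or> a'^2 = -1" using c1 unfolding cm nmat1_M2 unfolding mat1_M2 M2_eq by auto
    hence "a'^4 = 1" by (rule sq4)
    thus "M' \<in> Tsub 4" using Tsub4I ua' h assms(9) by (simp add: mpow0)
    assume "commut M M' = mat 1"
    hence "a'^2 = 1" unfolding cm mat1_M2 M2_eq by auto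
    hence "a' = 1 \<or> a' = -1" by (metis power2_eq_1_iff)
    hence "M' = mat 1 \<or> M' = - mat 1" unfolding MM nmat1_M2 unfolding mat1_M2 M2_eq by auto
    thus "M' \<in> center K" using scalar_center assms(11) by blast
  next
    assume h: "b = 0 \<and> b' = 1"
    have MM: "M' = M2 0 a' (inverse a') 0" "M = M2 a 0 0 (inverse a)" using h assms(8,9)
      by (simp_all add: mpow0 mpow1 mpow1s D Xm_M2 DX)
    have cm: "commut M M' = M2 (a ^ 2) 0 0 (inverse a^2)"
      unfolding commut_def MM Dinv[OF a0] DXinv[OF a0'] M2_mul M2_eq
      using a0 a0' by (simp add: field_simps power2_eq_square)
    have sq: "a^2 = 1 \<or> a^2 = -1" using c1 unfolding cm nmat1_M2 unfolding mat1_M2 M2_eq by auto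
    hence "a^4 = 1" by (rule sq4)
    thus "M \<in> Tsub 4" using Tsub4I ua h assms(8) by (simp add: mpow0)
    assume "commut M M' = mat 1"
    hence "a^2 = 1" unfolding cm mat1_M2 M2_eq by auto
    hence "a = 1 \<or> a = -1" by (metis power2_eq_1_iff)
    hence "M = mat 1 \<or> M = - mat 1" unfolding MM nmat1_M2 unfolding mat1_M2 M2_eq by auto
    thus "M \<in> center K" using scalar_center assms(10) by blast
  next
    assume h: "b = 1 \<and> b' = 1"
    have MM: "M = M2 0 a (inverse a) 0" "M' = M2 0 a' (inverse a') 0" using h assms(8,9)
      by (simp_all add: mpow0 mpow1 mpow1s D Xm_M2 DX)
    define c where "c = a / a'"
    have c0: "c \<noteq> 0" and uc: "cmod c = 1" using a0 a0' ua ua' by (auto simp: c_def norm_divide)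
    have cm: "commut M M' = M2 (c ^ 2) 0 0 (inverse c^2)"
      unfolding commut_def MM DXinv[OF a0] DXinv[OF a0'] M2_mul M2_eq c_def
      using a0 a0' by (simp add: field_simps power2_eq_square)
    have sq: "c^2 = 1 \<or> c^2 = -1" using c1 unfolding cm nmat1_M2 unfolding mat1_M2 M2_eq by auto
    hence "c^4 = 1" by (rule sq4)
    hence S: "diag2 c (inverse c) \<in> Tsub 4" using Tsub4I uc by simp
    have "M = diag2 c (inverse c) ** M'" unfolding MM D M2_mul M2_eq c_def
      using a0 a0' by (simp add: field_simps)
    thus "\<exists>S \<in> Tsub 4. M = S ** M'" using S by blast
    assume "commut M M' = mat 1"
    hence "c^2 = 1" unfolding cm mat1_M2 M2_eq by auto
    hence "c = 1 \<or> c = -1" by (metis power2_eq_1_iff)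
    hence "a = a' \<or> a = - a'" using a0' by (auto simp: c_def field_simps)
    thus "M = M' \<or> M = - M'" unfolding MM neg_M2 M2_eq by (auto simp: inverse_minus_eq)
  qed
qed

end
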